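(* Let $G\sim G(p,c/p)$ with $c=\Omega(p^{3/4+\epsilon'})$ for some $\epsilon'>0$. Partition the vertex set into three parts $A,B,C$ each of size $p/3$, let $\gamma=c^2/(6p)$, and let $m_{A,C}$ be the number of pairs $(a,c_0)\in A\times C$ such that at least $\gamma$ nodes of $B$ are adjacent to both $a$ and $c_0$. Then $$\Pr\Big(m_{A,C}\le\tfrac12(p/3)^2\Big)\le\frac{p}{3}\exp\!\Big(-\frac{p}{36}\Big).$$
   Context: $G(p,c/p)$ is the Erdős–Rényi random graph on $p$ vertices with independent edge probability $c/p$. *)

theory Defs
  imports "HOL-Probability.Probability" "HOL-Library.Landau_Symbols"
begin

definition vertex_pairs :: "nat \<Rightarrow> nat set set" where
  "vertex_pairs p = {e. e \<subseteq> {..<p} \<and> card e = 2}"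

text \<open>Erdos-Renyi random graph G(p,q): each potential edge present independently
  with probability q. A graph is its edge indicator on unordered pairs.\<close>
definition erdos_renyi :: "nat \<Rightarrow> real \<Rightarrow> (nat set \<Rightarrow> bool) pmf" where
  "erdos_renyi p q = Pi_pmf (vertex_pairs p) False (\<lambda>_. bernoulli_pmf q)"

definition adj :: "(nat set \<Rightarrow> bool) \<Rightarrow> nat \<Rightarrow> nat \<Rightarrow> bool" where
  "adj G u v = (u \<noteq> v \<and> G {u, v})"

definition m_AC :: "(nat set \<Rightarrow> bool) \<Rightarrow> nat set \<Rightarrow> nat set \<Rightarrow> nat set \<Rightarrow> real \<Rightarrow> nat" where
  "m_AC G A B C \<gamma> =
     card {(a, c0). a \<in> A \<and> c0 \<in> C \<and>
                   real (card {b \<in> B. adj G a b \<and> adj G c0 b}) \<ge> \<gamma>}"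

end

theory Submission
  imports Defs
begin

lemma prob_Pi_split:
  fixes I J :: "'a set" and Q R :: "('a \<Rightarrow> 'b) \<Rightarrow> bool"
  assumes fin: "finite I" and J: "J \<subseteq> I"
    and Q: "\<And>f g. (\<And>x. x \<in> J \<Longrightarrow> f x = g x) \<Longrightarrow> Q f = Q g"
    and R: "\<And>f g. (\<And>x. x \<in> I - J \<Longrightarrow> f x = g x) \<Longrightarrow> R f = R g"
  shows "measure_pmf.prob (Pi_pmf I d p) {f. Q f \<and> R f} =
         measure_pmf.prob (Pi_pmf I d p) {f. Q f} * measure_pmf.prob (Pi_pmf I d p) {f. R f}"
proof -
  define M1 where "M1 = Pi_pmf J d p"
  define M2 where "M2 = Pi_pmf (I - J) d p"
  define h where "h = (\<lambda>(f::'a\<Rightarrow>'b,g::'a\<Rightarrow>'b) x. if x \<in> J then f x else g x)"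
  have finJ: "finite J" using fin J finite_subset by blast
  have IU: "I = J \<union> (I - J)" using J by blast
  have eq: "Pi_pmf I d p = map_pmf h (pair_pmf M1 M2)"
    unfolding M1_def M2_def h_def
    by (subst IU, rule Pi_pmf_union) (use fin finJ in auto)
  have gen: "measure_pmf.prob (Pi_pmf I d p) {f. Q' f \<and> R' f} =
        measure_pmf.prob M1 {f. Q' f} * measure_pmf.prob M2 {g. R' g}"
    if Q': "\<And>f g. (\<And>x. x \<in> J \<Longrightarrow> f x = g x) \<Longrightarrow> Q' f = Q' g"
    and R': "\<And>f g. (\<And>x. x \<in> I - J \<Longrightarrow> f x = g x) \<Longrightarrow> R' f = R' g"
    for Q' R' :: "('a \<Rightarrow> 'b) \<Rightarrow> bool"
  proof -
    have hQ: "Q' (h (f,g)) = Q' f" for f g by (rule Q') (auto simp: h_def)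
    have hR: "R' (h (f,g)) = R' g" for f g by (rule R') (auto simp: h_def)
    have pre: "h -` {f. Q' f \<and> R' f} = {f. Q' f} \<times> {g. R' g}"
      by (auto simp: hQ hR)
    have "measure_pmf.prob (pair_pmf M1 M2) ({f. Q' f} \<times> {g. R' g}) =
          measure_pmf.prob (pair_pmf M1 M2) (({f. Q' f} \<inter> set_pmf M1) \<times> ({g. R' g} \<inter> set_pmf M2))"
      by (subst measure_Int_set_pmf[symmetric]) (simp add: Times_Int_Times)
    also have "\<dots> = measure_pmf.prob M1 ({f. Q' f} \<inter> set_pmf M1) * measure_pmf.prob M2 ({g. R' g} \<inter> set_pmf M2)"
      by (rule measure_pmf_prob_product) auto
    also have "\<dots> = measure_pmf.prob M1 {f. Q' f} * measure_pmf.prob M2 {g. R' g}"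
      by (simp add: measure_Int_set_pmf)
    finally show ?thesis by (simp only: eq measure_map_pmf pre)
  qed
  have g1: "measure_pmf.prob (Pi_pmf I d p) {f. Q f \<and> R f} =
        measure_pmf.prob M1 {f. Q f} * measure_pmf.prob M2 {g. R g}"
    by (rule gen[OF Q R])
  have triv1: "\<And>f g. (\<And>x. x \<in> J \<Longrightarrow> f x = g x) \<Longrightarrow> True = True" by simp
  have triv2: "\<And>f g. (\<And>x. x \<in> I - J \<Longrightarrow> f x = g x) \<Longrightarrow> True = True" by simp
  have g2': "measure_pmf.prob (Pi_pmf I d p) {f. Q f \<and> True} =
        measure_pmf.prob M1 {f. Q f} * measure_pmf.prob M2 {g. True}"
    by (rule gen[where Q'=Q and R'="\<lambda>_. True", OF Q triv2])
  have g3': "measure_pmf.prob (Pi_pmf I d p) {f. True \<and> R f} =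
        measure_pmf.prob M1 {f. True} * measure_pmf.prob M2 {g. R g}"
    by (rule gen[where Q'="\<lambda>_. True" and R'=R, OF triv1 R])
  have e1: "{f. Q f \<and> True} = {f. Q f}" "{f. True \<and> R f} = {f. R f}" by auto
  have e2: "measure_pmf.prob M2 {g. True} = 1" "measure_pmf.prob M1 {g. True} = 1"
    using measure_pmf.prob_space[of M2] measure_pmf.prob_space[of M1] by (simp_all add: UNIV_def[symmetric])
  have g2: "measure_pmf.prob (Pi_pmf I d p) {f. Q f} = measure_pmf.prob M1 {f. Q f}"
    using g2' unfolding e1 e2 by simp
  have g3: "measure_pmf.prob (Pi_pmf I d p) {f. R f} = measure_pmf.prob M2 {g. R g}"
    using g3' unfolding e1 e2 by simp
  show ?thesis by (simp only: g1 g2 g3)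
qed

lemma prob_Pi_blocks:
  fixes I :: "'a set" and K :: "'j \<Rightarrow> 'a set" and P :: "'j \<Rightarrow> ('a \<Rightarrow> 'b) \<Rightarrow> bool"
  assumes fin: "finite I" and finL: "finite L" and sub: "\<And>j. j \<in> L \<Longrightarrow> K j \<subseteq> I"
    and disj: "\<And>i j. i \<in> L \<Longrightarrow> j \<in> L \<Longrightarrow> i \<noteq> j \<Longrightarrow> K i \<inter> K j = {}"
    and dep: "\<And>j f g. j \<in> L \<Longrightarrow> (\<And>x. x \<in> K j \<Longrightarrow> f x = g x) \<Longrightarrow> P j f = P j g"
  shows "measure_pmf.prob (Pi_pmf I d p) {f. \<forall>j\<in>L. P j f} =
         (\<Prod>j\<in>L. measure_pmf.prob (Pi_pmf I d p) {f. P j f})"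
  using finL sub disj dep
proof (induction L rule: finite_induct)
  case empty
  then show ?case by simp
next
  case (insert l L)
  have "{f. \<forall>j\<in>insert l L. P j f} = {f. P l f \<and> (\<forall>j\<in>L. P j f)}" by auto
  also have "measure_pmf.prob (Pi_pmf I d p) \<dots> =
     measure_pmf.prob (Pi_pmf I d p) {f. P l f} * measure_pmf.prob (Pi_pmf I d p) {f. \<forall>j\<in>L. P j f}"
  proof (rule prob_Pi_split[where J="K l" and Q="P l" and R="\<lambda>f. \<forall>j\<in>L. P j f", OF fin])
    show "K l \<subseteq> I" using insert.prems(1) by simp
    show "P l f = P l g" if "\<And>x. x \<in> K l \<Longrightarrow> f x = g x" for f g
      using insert.prems(3)[of l f g] that by simp
    show "(\<forall>j\<in>L. P j f) = (\<forall>j\<in>L. P j g)" if h: "\<And>x. x \<in> I - K l \<Longrightarrow> f x = g x" for f g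
    proof -
      have "P j f = P j g" if j: "j \<in> L" for j
      proof (rule insert.prems(3))
        show "j \<in> insert l L" using j by simp
        fix x assume x: "x \<in> K j"
        have "j \<noteq> l" using j insert.hyps by blast
        then have "K j \<inter> K l = {}" using insert.prems(2)[of j l] j by simp
        moreover have "K j \<subseteq> I" using insert.prems(1)[of j] j by simp
        ultimately have "x \<in> I - K l" using x by blast
        then show "f x = g x" using h by blast
      qed
      then show ?thesis by blast
    qed
  qed
  also have "measure_pmf.prob (Pi_pmf I d p) {f. \<forall>j\<in>L. P j f} =
         (\<Prod>j\<in>L. measure_pmf.prob (Pi_pmf I d p) {f. P j f})"
  proof -
    have IHa: "\<And>j. j\<in>L \<Longrightarrow> K j \<subseteq> I" using insert.prems(1) by blast
    have IHb: "\<And>i j. i\<in>L \<Longrightarrow> j\<in>L \<Longrightarrow> i\<noteq>j \<Longrightarrow> K i \<inter> K j = {}"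
      using insert.prems(2) by blast
    have IHc: "P j f = P j g" if "j\<in>L" "\<And>x. x\<in>K j \<Longrightarrow> f x = g x" for j f g
      using insert.prems(3)[of j f g] that by blast
    show ?thesis by (rule insert.IH[OF IHa IHb IHc])
  qed
  finally show ?case using insert.hyps by (simp add: prod.insert)
qed

definition nbh :: "(nat set \<Rightarrow> bool) \<Rightarrow> nat \<Rightarrow> nat set \<Rightarrow> nat set" where
  "nbh G v N = {b\<in>N. G {v, b}}"

lemma finite_vertex_pairs: "finite (vertex_pairs p)"
proof -
  have "vertex_pairs p \<subseteq> Pow {..<p}" by (auto simp: vertex_pairs_def)
  then show ?thesis by (rule finite_subset) simp
qed

lemma pair_in_vertex_pairs: "u < p \<Longrightarrow> v < p \<Longrightarrow> u \<noteq> v \<Longrightarrow> {u, v} \<in> vertex_pairs p"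
  by (auto simp: vertex_pairs_def)

lemma finite_set_pmf_er: "finite (set_pmf (erdos_renyi p q))"
proof -
  have "set_pmf (erdos_renyi p q) \<subseteq> PiE_dflt (vertex_pairs p) False (\<lambda>_. UNIV)"
    unfolding erdos_renyi_def using set_Pi_pmf_subset[OF finite_vertex_pairs, where dflt=False and p="\<lambda>_. bernoulli_pmf q"]
    by (auto simp: PiE_dflt_def)
  moreover have "finite (PiE_dflt (vertex_pairs p) False (\<lambda>_. UNIV :: bool set))"
    by (rule finite_PiE_dflt) (auto simp: finite_vertex_pairs)
  ultimately show ?thesis by (rule finite_subset)
qed

lemma prob_le_expectation:
  fixes M :: "'a pmf" and g :: "'a \<Rightarrow> real"
  assumes fin: "finite (set_pmf M)" and nn: "\<And>x. x \<in> set_pmf M \<Longrightarrow> 0 \<le> g x"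
    and ge: "\<And>x. x \<in> set_pmf M \<Longrightarrow> x \<in> S \<Longrightarrow> 1 \<le> g x"
  shows "measure_pmf.prob M S \<le> measure_pmf.expectation M g"
proof -
  have "measure_pmf.prob M S = measure_pmf.expectation M (indicator S)" by simp
  also have "\<dots> \<le> measure_pmf.expectation M g"
  proof (rule integral_mono_AE)
    show "integrable (measure_pmf M) (indicator S :: 'a \<Rightarrow> real)" by (rule integrable_measure_pmf_finite[OF fin])
    show "integrable (measure_pmf M) g" by (rule integrable_measure_pmf_finite[OF fin])
    show "AE x in measure_pmf M. (indicator S x :: real) \<le> g x"
      by (rule AE_pmfI) (use nn ge in \<open>auto simp: indicator_def\<close>)
  qed
  finally show ?thesis .
qed

lemma tail_bound:
  fixes t q \<beta> :: real
  assumes v: "v < p" and N: "N \<subseteq> {..<p}" and vN: "v \<notin> N"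
    and q: "0 \<le> q" "q \<le> 1" and b: "0 < \<beta>" "\<beta> \<le> 1"
  shows "measure_pmf.prob (erdos_renyi p q) {G. real (card (nbh G v N)) \<le> t}
         \<le> exp (t * ln (1/\<beta>)) * (1 - q * (1 - \<beta>)) ^ card N"
proof -
  define I where "I = vertex_pairs p"
  define E0 where "E0 = (\<lambda>b. {v, b}) ` N"
  have finI: "finite I" by (simp add: I_def finite_vertex_pairs)
  have finN: "finite N" using N finite_subset by blast
  have inj: "inj_on (\<lambda>b. {v, b}) N"
    by (rule inj_onI) (use vN in \<open>auto simp: doubleton_eq_iff\<close>)
  have E0I: "E0 \<subseteq> I" unfolding E0_def I_def
    using N v vN by (auto intro!: pair_in_vertex_pairs)
  have cardE0: "card E0 = card N" unfolding E0_def by (rule card_image[OF inj])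
  have card_nbh: "card (nbh G v N) = card {e\<in>E0. G e}" for G
  proof -
    have "(\<lambda>b. {v, b}) ` (nbh G v N) = {e\<in>E0. G e}"
      unfolding nbh_def E0_def by auto
    moreover have "inj_on (\<lambda>b. {v, b}) (nbh G v N)"
      by (rule inj_on_subset[OF inj]) (auto simp: nbh_def)
    ultimately show ?thesis by (metis card_image)
  qed
  define h where "h = (\<lambda>e x. if e \<in> E0 \<and> x then \<beta> else (1::real))"
  have prodh: "(\<Prod>e\<in>I. h e (G e)) = \<beta> ^ card (nbh G v N)" for G
  proof -
    have "(\<Prod>e\<in>I. h e (G e)) = (\<Prod>e\<in>{e\<in>I. e \<in> E0 \<and> G e}. \<beta>)"
      unfolding h_def using prod.inter_filter[OF finI, of "\<lambda>_. \<beta>" "\<lambda>e. e \<in> E0 \<and> G e"] by simp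
    also have "{e\<in>I. e \<in> E0 \<and> G e} = {e\<in>E0. G e}" using E0I by auto
    finally show ?thesis by (simp add: card_nbh)
  qed
  define C where "C = exp (t * ln (1/\<beta>))"
  define g where "g = (\<lambda>G. C * \<beta> ^ card (nbh G v N))"
  have "measure_pmf.prob (erdos_renyi p q) {G. real (card (nbh G v N)) \<le> t}
        \<le> measure_pmf.expectation (erdos_renyi p q) g"
  proof (rule prob_le_expectation[OF finite_set_pmf_er])
    show "0 \<le> g G" for G unfolding g_def C_def using b by simp
    show "1 \<le> g G" if "G \<in> {G. real (card (nbh G v N)) \<le> t}" for G
    proof -
      define k where "k = card (nbh G v N)"
      have kt: "real k \<le> t" using that by (simp add: k_def)
      have "\<beta> ^ k = exp (real k * ln \<beta>)" using b by (subst exp_of_nat_mult) simp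
      then have "g G = exp (t * ln (1/\<beta>) + real k * ln \<beta>)"
        unfolding g_def C_def k_def[symmetric] by (simp add: exp_add)
      also have "t * ln (1/\<beta>) + real k * ln \<beta> = (t - real k) * ln (1/\<beta>)"
        using b by (simp add: ln_div algebra_simps)
      also have "exp \<dots> \<ge> 1"
      proof -
        have "ln (1/\<beta>) \<ge> 0" using b by simp
        then have "(t - real k) * ln (1/\<beta>) \<ge> 0" using kt by simp
        then show ?thesis by simp
      qed
      finally show ?thesis .
    qed
  qed
  also have "measure_pmf.expectation (erdos_renyi p q) g =
      C * measure_pmf.expectation (erdos_renyi p q) (\<lambda>G. \<Prod>e\<in>I. h e (G e))"
    unfolding g_def prodh by simp
  also have "measure_pmf.expectation (erdos_renyi p q) (\<lambda>G. \<Prod>e\<in>I. h e (G e)) =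
      (\<Prod>e\<in>I. measure_pmf.expectation (bernoulli_pmf q) (h e))"
    unfolding erdos_renyi_def I_def[symmetric]
  proof (rule expectation_prod_Pi_pmf[OF finI])
    show "integrable (measure_pmf (bernoulli_pmf q)) (h e)" for e
      by (rule integrable_measure_pmf_finite) simp
    show "0 \<le> h e x" for e x using b by (simp add: h_def)
  qed
  also have "(\<Prod>e\<in>I. measure_pmf.expectation (bernoulli_pmf q) (h e)) =
      (\<Prod>e\<in>I. if e \<in> E0 then 1 - q * (1 - \<beta>) else 1)"
    using q by (intro prod.cong refl) (simp add: h_def algebra_simps)
  also have "\<dots> = (1 - q * (1 - \<beta>)) ^ card E0"
    using E0I by (simp add: prod.If_cases[OF finI] Int_absorb1)
  finally show ?thesis by (simp add: C_def cardE0)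
qed

lemma pow_le_exp:
  fixes x :: real
  assumes "0 \<le> x" "x \<le> 1"
  shows "(1 - x) ^ m \<le> exp (- x * real m)"
proof -
  have "(1 - x) ^ m \<le> exp (- x) ^ m"
    by (rule power_mono) (use assms exp_ge_add_one_self[of "-x"] in auto)
  also have "\<dots> = exp (- x * real m)" by (simp add: exp_of_nat_mult[symmetric] mult.commute)
  finally show ?thesis .
qed

lemma ln43: "ln (4/3::real) \<le> 3/10"
proof -
  have "(1 + 1/20::real) ^ 6 \<le> exp (1/20) ^ 6"
    by (rule power_mono) (use exp_ge_add_one_self[of "1/20::real"] in auto)
  also have "\<dots> = exp (3/10)" by (simp add: exp_of_nat_mult[symmetric])
  finally have e: "(21/20::real) ^ 6 \<le> exp (3/10)" by simp
  have "(4/3::real) \<le> (21/20) ^ 6" by (simp add: eval_nat_numeral)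
  with e have "4/3 \<le> exp (3/10::real)" by linarith
  then show ?thesis using ln_le_cancel_iff[of "4/3" "exp(3/10)"] by simp
qed

lemma ln32: "ln (3/2::real) \<le> 9/20"
proof -
  have "(1 + 3/40::real) ^ 6 \<le> exp (3/40) ^ 6"
    by (rule power_mono) (use exp_ge_add_one_self[of "3/40::real"] in auto)
  also have "\<dots> = exp (9/20)" by (simp add: exp_of_nat_mult[symmetric])
  finally have e: "(43/40::real) ^ 6 \<le> exp (9/20)" by simp
  have "(3/2::real) \<le> (43/40) ^ 6" by (simp add: eval_nat_numeral)
  with e have "3/2 \<le> exp (9/20::real)" by linarith
  then show ?thesis using ln_le_cancel_iff[of "3/2" "exp(9/20)"] by simp
qed

lemma low_deg_bound:
  fixes c :: real
  assumes a: "a < p" and B: "B \<subseteq> {..<p}" "a \<notin> B" and cB: "3 * card B = p"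
    and c: "0 \<le> c" "c \<le> real p" and p: "p > 0"
  shows "measure_pmf.prob (erdos_renyi p (c / real p)) {G. real (card (nbh G a B)) < c / 4}
         \<le> exp (- c / 120)"
proof -
  define q where "q = c / real p"
  have q: "0 \<le> q" "q \<le> 1" using c p by (auto simp: q_def field_simps)
  have "measure_pmf.prob (erdos_renyi p q) {G. real (card (nbh G a B)) < c / 4}
        \<le> measure_pmf.prob (erdos_renyi p q) {G. real (card (nbh G a B)) \<le> c / 4}"
    by (rule measure_pmf.finite_measure_mono) auto
  also have "\<dots> \<le> exp (c / 4 * ln (1 / (3/4))) * (1 - q * (1 - 3/4)) ^ card B"
    by (rule tail_bound[OF a B q]) auto
  also have "\<dots> \<le> exp (c / 4 * (3/10)) * exp (- (q/4) * real (card B))"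
  proof (rule mult_mono)
    show "exp (c / 4 * ln (1 / (3/4))) \<le> exp (c / 4 * (3/10))"
      using mult_left_mono[OF ln43, of "c/4"] c by simp
    show "(1 - q * (1 - 3/4)) ^ card B \<le> exp (- (q/4) * real (card B))"
      using pow_le_exp[of "q/4" "card B"] q by simp
  qed (use q in auto)
  also have "\<dots> = exp (- c / 120)"
  proof -
    have "(q/4) * real (card B) = c / 12"
      using cB p by (simp add: q_def field_simps flip: of_nat_mult)
    then show ?thesis by (simp add: exp_add[symmetric])
  qed
  finally show ?thesis by (simp add: q_def)
qed

lemma codeg_bound:
  fixes c :: real
  assumes v: "v < p" and N: "N \<subseteq> {..<p}" "v \<notin> N" and cN: "c / 4 \<le> real (card N)"
    and c: "0 \<le> c" "c \<le> real p" and p: "p > 0"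
  shows "measure_pmf.prob (erdos_renyi p (c / real p)) {G. real (card (nbh G v N)) < c\<^sup>2 / (6 * real p)}
         \<le> exp (- c\<^sup>2 / (120 * real p))"
proof -
  define q where "q = c / real p"
  have q: "0 \<le> q" "q \<le> 1" using c p by (auto simp: q_def field_simps)
  define \<gamma> where "\<gamma> = c\<^sup>2 / (6 * real p)"
  have "measure_pmf.prob (erdos_renyi p q) {G. real (card (nbh G v N)) < \<gamma>}
        \<le> measure_pmf.prob (erdos_renyi p q) {G. real (card (nbh G v N)) \<le> \<gamma>}"
    by (rule measure_pmf.finite_measure_mono) auto
  also have "\<dots> \<le> exp (\<gamma> * ln (1 / (2/3))) * (1 - q * (1 - 2/3)) ^ card N"
    by (rule tail_bound[OF v N q]) auto
  also have "\<dots> \<le> exp (\<gamma> * (9/20)) * exp (- (q/3) * real (card N))"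
  proof (rule mult_mono)
    have "\<gamma> \<ge> 0" using p by (simp add: \<gamma>_def)
    then show "exp (\<gamma> * ln (1 / (2/3))) \<le> exp (\<gamma> * (9/20))"
      using mult_left_mono[OF ln32, of "\<gamma>"] by simp
    show "(1 - q * (1 - 2/3)) ^ card N \<le> exp (- (q/3) * real (card N))"
      using pow_le_exp[of "q/3" "card N"] q by simp
  qed (use q in auto)
  also have "\<dots> \<le> exp (- c\<^sup>2 / (120 * real p))"
  proof -
    have "(q/3) * (c/4) \<le> (q/3) * real (card N)"
      using cN q by (intro mult_left_mono) auto
    moreover have "(q/3) * (c/4) = c\<^sup>2 / (12 * real p)"
      by (simp add: q_def power2_eq_square field_simps)
    moreover have "\<gamma> * (9/20) = 3 * c\<^sup>2 / (40 * real p)"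
      by (simp add: \<gamma>_def field_simps)
    moreover have "3 * c\<^sup>2 / (40 * real p) = (9/10) * (c\<^sup>2 / (12 * real p))"
      by (simp add: field_simps)
    moreover have "- c\<^sup>2 / (120 * real p) = - (1/10) * (c\<^sup>2 / (12 * real p))"
      by (simp add: field_simps)
    ultimately have "\<gamma> * (9/20) + - (q/3) * real (card N) \<le> - c\<^sup>2 / (120 * real p)"
      by linarith
    then show ?thesis by (simp add: exp_add[symmetric])
  qed
  finally show ?thesis by (simp add: q_def \<gamma>_def)
qed

lemma nbh_dep:
  assumes "\<And>x. x \<in> (\<lambda>b. {v, b}) ` N \<Longrightarrow> G x = G' x"
  shows "nbh G v N = nbh G' v N"
  using assms unfolding nbh_def by auto

lemma blocks_disj:
  assumes "u \<notin> B" "w \<notin> B" "u \<noteq> w"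
  shows "(\<lambda>b. {u, b}) ` B \<inter> (\<lambda>b. {w, b}) ` B = {}"
  using assms by (auto simp: doubleton_eq_iff)

lemma blocks_sub:
  assumes "u < p" "u \<notin> B" "B \<subseteq> {..<p}"
  shows "(\<lambda>b. {u, b}) ` B \<subseteq> vertex_pairs p"
  using assms by (auto intro!: pair_in_vertex_pairs)

lemma prob_er_blocks:
  fixes P :: "nat \<Rightarrow> (nat set \<Rightarrow> bool) \<Rightarrow> bool"
  assumes finL: "finite L" and L: "L \<subseteq> {..<p}" "L \<inter> B = {}" and B: "B \<subseteq> {..<p}"
    and dep: "\<And>j G G'. j \<in> L \<Longrightarrow> (\<And>x. x \<in> (\<lambda>b. {j, b}) ` B \<Longrightarrow> G x = G' x) \<Longrightarrow> P j G = P j G'"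
  shows "measure_pmf.prob (erdos_renyi p q) {G. \<forall>j\<in>L. P j G} =
         (\<Prod>j\<in>L. measure_pmf.prob (erdos_renyi p q) {G. P j G})"
  unfolding erdos_renyi_def
proof (rule prob_Pi_blocks[OF finite_vertex_pairs finL])
  show "(\<lambda>b. {j, b}) ` B \<subseteq> vertex_pairs p" if "j \<in> L" for j
    using that L B by (intro blocks_sub) auto
  show "(\<lambda>b. {i, b}) ` B \<inter> (\<lambda>b. {j, b}) ` B = {}" if "i \<in> L" "j \<in> L" "i \<noteq> j" for i j
    using that L by (intro blocks_disj) auto
  show "P j f = P j g" if "j \<in> L" "\<And>x. x \<in> (\<lambda>b. {j, b}) ` B \<Longrightarrow> f x = g x" for j f g
    using dep[of j f g] that by blast
qed

lemma prob_all_low: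
  fixes c :: real
  assumes finT: "finite T" and T: "T \<subseteq> {..<p}" "T \<inter> B = {}" and B: "B \<subseteq> {..<p}"
    and cB: "3 * card B = p" and c: "0 \<le> c" "c \<le> real p" and p: "p > 0"
  shows "measure_pmf.prob (erdos_renyi p (c / real p)) {G. \<forall>a\<in>T. real (card (nbh G a B)) < c / 4}
         \<le> exp (- c / 120) ^ card T"
proof -
  have "measure_pmf.prob (erdos_renyi p (c / real p)) {G. \<forall>a\<in>T. real (card (nbh G a B)) < c / 4}
      = (\<Prod>a\<in>T. measure_pmf.prob (erdos_renyi p (c / real p)) {G. real (card (nbh G a B)) < c / 4})"
  proof (rule prob_er_blocks[OF finT T B])
    show "(real (card (nbh G j B)) < c / 4) = (real (card (nbh G' j B)) < c / 4)"
      if "j \<in> T" "\<And>x. x \<in> (\<lambda>b. {j, b}) ` B \<Longrightarrow> G x = G' x" for j G G'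
      using nbh_dep[of j B G G'] that by simp
  qed
  also have "\<dots> \<le> (\<Prod>a\<in>T. exp (- c / 120))"
  proof (rule prod_mono)
    fix a assume a: "a \<in> T"
    show "0 \<le> measure_pmf.prob (erdos_renyi p (c / real p)) {G. real (card (nbh G a B)) < c / 4} \<and>
          measure_pmf.prob (erdos_renyi p (c / real p)) {G. real (card (nbh G a B)) < c / 4} \<le> exp (- c / 120)"
      using a T by (intro conjI measure_nonneg low_deg_bound[OF _ B _ cB c p]) auto
  qed
  finally show ?thesis by simp
qed

lemma prob_F:
  fixes c :: real
  assumes a: "a < p" "a \<notin> B" "a \<notin> S" and B: "B \<subseteq> {..<p}"
    and S: "finite S" "S \<subseteq> {..<p}" "S \<inter> B = {}"
    and c: "0 \<le> c" "c \<le> real p" and p: "p > 0"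
  shows "measure_pmf.prob (erdos_renyi p (c / real p))
           {G. \<not> real (card (nbh G a B)) < c / 4 \<and>
               (\<forall>c0\<in>S. real (card (nbh G c0 (nbh G a B)))  < c\<^sup>2 / (6 * real p))}
         \<le> exp (- c\<^sup>2 / (120 * real p)) ^ card S"
proof -
  define M where "M = erdos_renyi p (c / real p)"
  define \<gamma> where "\<gamma> = c\<^sup>2 / (6 * real p)"
  define \<delta> where "\<delta> = exp (- c\<^sup>2 / (120 * real p))"
  define NN where "NN = {N. N \<subseteq> B \<and> c / 4 \<le> real (card N)}"
  define F where "F = (\<lambda>N. {G. nbh G a B = N \<and> (\<forall>c0\<in>S. real (card (nbh G c0 N)) < \<gamma>)})"
  have finB: "finite B" using B finite_subset by blast
  have finNN: "finite NN"
  proof (rule finite_subset)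
    show "NN \<subseteq> Pow B" by (auto simp: NN_def)
    show "finite (Pow B)" using finB by simp
  qed
  have eqU: "{G. \<not> real (card (nbh G a B)) < c / 4 \<and>
               (\<forall>c0\<in>S. real (card (nbh G c0 (nbh G a B))) < \<gamma>)} = (\<Union>N\<in>NN. F N)"
    unfolding NN_def F_def by (auto simp: nbh_def)
  have FN: "measure_pmf.prob M (F N) \<le> measure_pmf.prob M {G. nbh G a B = N} * \<delta> ^ card S"
    if N: "N \<in> NN" for N
  proof -
    define P where "P = (\<lambda>j G. if j = a then nbh G a B = N else real (card (nbh G j N)) < \<gamma>)"
    have NB: "N \<subseteq> B" and cN: "c / 4 \<le> real (card N)" using N by (auto simp: NN_def)
    have "F N = {G. \<forall>j\<in>insert a S. P j G}"
      unfolding F_def P_def using a by auto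
    also have "measure_pmf.prob M \<dots> = (\<Prod>j\<in>insert a S. measure_pmf.prob M {G. P j G})"
      unfolding M_def
    proof (rule prob_er_blocks[OF _ _ _ B])
      show "finite (insert a S)" using S by simp
      show "insert a S \<subseteq> {..<p}" using a S by auto
      show "insert a S \<inter> B = {}" using a S by auto
      show "P j G = P j G'"
        if j: "j \<in> insert a S" and h: "\<And>x. x \<in> (\<lambda>b. {j, b}) ` B \<Longrightarrow> G x = G' x" for j G G'
      proof (cases "j = a")
        case True
        then show ?thesis using nbh_dep[of j B G G'] h by (simp add: P_def)
      next
        case False
        have "nbh G j N = nbh G' j N" using NB h by (intro nbh_dep) auto
        then show ?thesis using False by (simp add: P_def)
      qed
    qed
    also have "\<dots> = measure_pmf.prob M {G. P a G} * (\<Prod>j\<in>S. measure_pmf.prob M {G. P j G})"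
      using S a by (simp add: prod.insert)
    also have "\<dots> = measure_pmf.prob M {G. nbh G a B = N} * (\<Prod>j\<in>S. measure_pmf.prob M {G. P j G})"
      by (simp add: P_def)
    also have "\<dots> \<le> measure_pmf.prob M {G. nbh G a B = N} * (\<Prod>j\<in>S. \<delta>)"
    proof (rule mult_left_mono)
      show "(\<Prod>j\<in>S. measure_pmf.prob M {G. P j G}) \<le> (\<Prod>j\<in>S. \<delta>)"
      proof (rule prod_mono)
        fix j assume j: "j \<in> S"
        have ja: "j \<noteq> a" using j a by auto
        have "measure_pmf.prob M {G. P j G} = measure_pmf.prob M {G. real (card (nbh G j N)) < \<gamma>}"
          using ja by (simp add: P_def)
        also have "\<dots> \<le> \<delta>" unfolding M_def \<gamma>_def \<delta>_def
          using j S NB B by (intro codeg_bound[OF _ _ _ cN c p]) auto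
        finally show "0 \<le> measure_pmf.prob M {G. P j G} \<and> measure_pmf.prob M {G. P j G} \<le> \<delta>"
          by simp
      qed
      show "0 \<le> measure_pmf.prob M {G. nbh G a B = N}" by simp
    qed
    finally show ?thesis by simp
  qed
  have "measure_pmf.prob M (\<Union>N\<in>NN. F N) \<le> (\<Sum>N\<in>NN. measure_pmf.prob M (F N))"
    by (rule measure_pmf.finite_measure_subadditive_finite[OF finNN]) auto
  also have "\<dots> \<le> (\<Sum>N\<in>NN. measure_pmf.prob M {G. nbh G a B = N} * \<delta> ^ card S)"
    by (rule sum_mono) (rule FN)
  also have "\<dots> = (\<Sum>N\<in>NN. measure_pmf.prob M {G. nbh G a B = N}) * \<delta> ^ card S"
    by (simp add: sum_distrib_right)
  also have "(\<Sum>N\<in>NN. measure_pmf.prob M {G. nbh G a B = N}) = measure_pmf.prob M (\<Union>N\<in>NN. {G. nbh G a B = N})"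
    by (rule measure_pmf.finite_measure_finite_Union[symmetric, OF finNN])
       (auto simp: disjoint_family_on_def)
  also have "\<dots> * \<delta> ^ card S \<le> 1 * \<delta> ^ card S"
    by (rule mult_right_mono) (auto simp: \<delta>_def)
  finally have "measure_pmf.prob M (\<Union>N\<in>NN. F N) \<le> \<delta> ^ card S" by simp
  then show ?thesis unfolding M_def \<delta>_def \<gamma>_def[symmetric] eqU .
qed

lemma two_pow_le_exp: "(2::real) ^ n \<le> exp (real n)"
proof -
  have "(2::real) ^ n \<le> exp 1 ^ n"
    by (rule power_mono) (use exp_ge_add_one_self[of "1::real"] in auto)
  then show ?thesis by (simp add: exp_of_nat_mult[symmetric])
qed

lemma num_bound:
  fixes x :: real and n k d :: nat
  assumes x: "120 * d * 2 \<le> x" and k: "real n \<le> real d * real k" and d: "d > 0"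
  shows "2 ^ n * exp (- x / 120) ^ k \<le> exp (- real n)"
proof -
  have "exp (- x / 120) ^ k = exp (- x / 120 * real k)"
    by (simp add: exp_of_nat_mult[symmetric] mult.commute)
  also have "\<dots> \<le> exp (- 2 * real n)"
  proof -
    have "2 * real n \<le> 2 * real d * real k" using k by simp
    also have "\<dots> \<le> x / 120 * real k"
      using x by (intro mult_right_mono) (auto simp: field_simps)
    finally show ?thesis by simp
  qed
  finally have "2 ^ n * exp (- x / 120) ^ k \<le> exp (real n) * exp (- 2 * real n)"
    by (intro mult_mono two_pow_le_exp) auto
  also have "\<dots> = exp (- real n)" by (simp add: exp_add[symmetric])
  finally show ?thesis .
qed

lemma num_final:
  fixes n :: nat
  assumes "n \<ge> 2"
  shows "exp (- real n) + real n * exp (- real n) \<le> real n * exp (- real n / 12)"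
proof -
  have "1 + real n \<le> real n * (1 + 11 * real n / 12)"
  proof -
    have "real n * real n \<ge> 2 * 2" using assms by (intro mult_mono) auto
    then show ?thesis by (simp add: field_simps)
  qed
  also have "\<dots> \<le> real n * exp (11 * real n / 12)"
    using exp_ge_add_one_self[of "11 * real n / 12"] by (intro mult_left_mono) auto
  finally have "(1 + real n) * exp (- real n) \<le> real n * exp (11 * real n / 12) * exp (- real n)"
    by (intro mult_right_mono) auto
  also have "\<dots> = real n * exp (- real n / 12)"
    by (simp add: exp_add[symmetric])
  finally show ?thesis by (simp add: algebra_simps)
qed

lemma main_fixed:
  fixes c :: real and p :: nat
  assumes part: "A \<union> B \<union> C = {..<p}" "A \<inter> B = {}" "A \<inter> C = {}" "B \<inter> C = {}"
    and cards: "3 * card A = p" "3 * card B = p" "3 * card C = p"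
    and c: "0 \<le> c" "c \<le> real p" and big: "1440 \<le> c\<^sup>2 / real p" and p6: "6 \<le> p"
  shows "measure_pmf.prob (erdos_renyi p (c / real p))
           {G. real (m_AC G A B C (c\<^sup>2 / (6 * real p))) \<le> (1/2) * (real p / 3)\<^sup>2}
         \<le> (real p / 3) * exp (- real p / 36)"
proof -
  define n where "n = card A"
  have cB: "card B = n" and cC: "card C = n" and pn: "p = 3 * n" using cards by (auto simp: n_def)
  have n2: "n \<ge> 2" using p6 pn by simp
  have p0: "p > 0" using p6 by simp
  have Ap: "A \<subseteq> {..<p}" and Bp: "B \<subseteq> {..<p}" and Cp: "C \<subseteq> {..<p}" using part(1) by auto
  have finA: "finite A" and finB: "finite B" and finC: "finite C"
    using Ap Bp Cp finite_subset by blast+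
  define M where "M = erdos_renyi p (c / real p)"
  define \<gamma> where "\<gamma> = c\<^sup>2 / (6 * real p)"
  define Low where "Low = (\<lambda>G. {a\<in>A. real (card (nbh G a B)) < c / 4})"
  define Bad where "Bad = (\<lambda>G a. {c0\<in>C. real (card (nbh G c0 (nbh G a B))) < \<gamma>})"
  define k1 where "k1 = n div 6 + 1"
  define k2 where "k2 = n div 4 + 1"
  define E1 where "E1 = {G. k1 \<le> card (Low G)}"
  define E2 where "E2 = {G. \<exists>a\<in>A. \<not> real (card (nbh G a B)) < c / 4 \<and> k2 \<le> card (Bad G a)}"
  define H where "H = {G. real (m_AC G A B C \<gamma>) \<le> (1/2) * (real p / 3)\<^sup>2}"
  have sub: "H \<subseteq> E1 \<union> E2"
  proof
    fix G assume GH: "G \<in> H"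
    show "G \<in> E1 \<union> E2"
    proof (rule ccontr)
      assume "G \<notin> E1 \<union> E2"
      then have nE1: "card (Low G) < k1" and
        nE2: "\<And>a. a \<in> A \<Longrightarrow> \<not> real (card (nbh G a B)) < c / 4 \<Longrightarrow> card (Bad G a) < k2"
        unfolding E1_def E2_def by auto
      have codeg: "{b\<in>B. adj G a b \<and> adj G c0 b} = nbh G c0 (nbh G a B)"
        if "a \<in> A" "c0 \<in> C" for a c0
        using that part by (auto simp: adj_def nbh_def)
      have "{(a, c0). a \<in> A \<and> c0 \<in> C \<and> \<gamma> \<le> real (card {b\<in>B. adj G a b \<and> adj G c0 b})}
            = (SIGMA a:A. C - Bad G a)"
        using codeg by (auto simp: Bad_def not_less)
      then have "m_AC G A B C \<gamma> = card (SIGMA a:A. C - Bad G a)" by (simp add: m_AC_def)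
      also have "\<dots> = (\<Sum>a\<in>A. card (C - Bad G a))" using finA finC by simp
      finally have s1: "m_AC G A B C \<gamma> = (\<Sum>a\<in>A. card (C - Bad G a))" .
      have s2: "(\<Sum>a\<in>A - Low G. card (C - Bad G a)) \<le> (\<Sum>a\<in>A. card (C - Bad G a))"
        by (rule sum_mono2[OF finA]) auto
      have s3: "(\<Sum>a\<in>A - Low G. n - n div 4) \<le> (\<Sum>a\<in>A - Low G. card (C - Bad G a))"
      proof (rule sum_mono)
        fix a assume a: "a \<in> A - Low G"
        then have "card (Bad G a) < k2" using nE2 by (auto simp: Low_def)
        then have "card (Bad G a) \<le> n div 4" by (simp add: k2_def)
        moreover have "card (C - Bad G a) = n - card (Bad G a)"
          using finC cC by (subst card_Diff_subset) (auto simp: Bad_def intro: finite_subset)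
        ultimately show "n - n div 4 \<le> card (C - Bad G a)" by simp
      qed
      have s4: "(\<Sum>a\<in>A - Low G. n - n div 4) = card (A - Low G) * (n - n div 4)" by simp
      have s5: "card (A - Low G) = n - card (Low G)"
        using finA by (subst card_Diff_subset) (auto simp: Low_def n_def intro: finite_subset)
      have mge: "(n - card (Low G)) * (n - n div 4) \<le> m_AC G A B C \<gamma>"
      proof -
        have "(n - card (Low G)) * (n - n div 4) = card (A - Low G) * (n - n div 4)" using s5 by simp
        then show ?thesis using s1 s2 s3 s4 by linarith
      qed
      have l1: "real (n - card (Low G)) \<ge> 5 * real n / 6"
      proof -
        have "card (Low G) \<le> n div 6" using nE1 by (simp add: k1_def)
        moreover have "6 * (n div 6) \<le> n" by simp
        ultimately have "6 * card (Low G) \<le> n" by linarith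
        then show ?thesis by (simp add: of_nat_diff)
      qed
      have l2: "real (n - n div 4) \<ge> 3 * real n / 4"
      proof -
        have "4 * (n div 4) \<le> n" by simp
        then show ?thesis by (simp add: of_nat_diff)
      qed
      have "5 * real n / 6 * (3 * real n / 4) \<le> real (n - card (Low G)) * real (n - n div 4)"
        using l1 l2 by (intro mult_mono) auto
      also have "\<dots> \<le> real (m_AC G A B C \<gamma>)" using mge
        by (metis of_nat_le_iff of_nat_mult)
      also have "\<dots> \<le> (1/2) * (real n)\<^sup>2" using GH by (simp add: H_def pn)
      finally have "5 * real n / 6 * (3 * real n / 4) \<le> (1/2) * (real n)\<^sup>2" .
      moreover have "real n > 0" using n2 by simp
      ultimately show False by (simp add: power2_eq_square field_simps)
    qed
  qed
  define \<delta>1 where "\<delta>1 = exp (- c / 120)"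
  define \<delta>2 where "\<delta>2 = exp (- c\<^sup>2 / (120 * real p))"
  define LowAll where "LowAll = (\<lambda>T. {G. \<forall>a\<in>T. real (card (nbh G a B)) < c / 4})"
  define Fs where "Fs = (\<lambda>(a,S). {G. \<not> real (card (nbh G a B)) < c / 4 \<and>
               (\<forall>c0\<in>S. real (card (nbh G c0 (nbh G a B))) < c\<^sup>2 / (6 * real p))})"
  define TT1 where "TT1 = {T. T \<subseteq> A \<and> card T = k1}"
  define TT2 where "TT2 = {S. S \<subseteq> C \<and> card S = k2}"
  have TT1P: "TT1 \<subseteq> Pow A" and TT2P: "TT2 \<subseteq> Pow C" by (auto simp: TT1_def TT2_def)
  have finTT1: "finite TT1" using TT1P finA by (meson finite_Pow_iff finite_subset)
  have finTT2: "finite TT2" using TT2P finC by (meson finite_Pow_iff finite_subset)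
  have cTT1: "card TT1 \<le> 2 ^ n"
    using card_mono[OF _ TT1P] finA by (simp add: card_Pow n_def)
  have cTT2: "card TT2 \<le> 2 ^ n"
    using card_mono[OF _ TT2P] finC by (simp add: card_Pow cC)
  have E1sub: "E1 \<subseteq> (\<Union>T\<in>TT1. LowAll T)"
  proof
    fix G assume "G \<in> E1"
    then have "k1 \<le> card (Low G)" by (simp add: E1_def)
    then obtain T where T: "T \<subseteq> Low G" "card T = k1" by (meson obtain_subset_with_card_n)
    then have "T \<in> TT1" "G \<in> LowAll T" by (auto simp: TT1_def LowAll_def Low_def)
    then show "G \<in> (\<Union>T\<in>TT1. LowAll T)" by blast
  qed
  have E2sub: "E2 \<subseteq> (\<Union>x\<in>A \<times> TT2. Fs x)"
  proof
    fix G assume "G \<in> E2"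
    then obtain a where a: "a \<in> A" "\<not> real (card (nbh G a B)) < c / 4" "k2 \<le> card (Bad G a)"
      by (auto simp: E2_def)
    then obtain S where S: "S \<subseteq> Bad G a" "card S = k2" by (meson obtain_subset_with_card_n)
    then have "(a, S) \<in> A \<times> TT2" "G \<in> Fs (a, S)"
      using a by (auto simp: TT2_def Fs_def Bad_def \<gamma>_def)
    then show "G \<in> (\<Union>x\<in>A \<times> TT2. Fs x)" by blast
  qed
  have pE1: "measure_pmf.prob M E1 \<le> 2 ^ n * \<delta>1 ^ k1"
  proof -
    have "measure_pmf.prob M E1 \<le> measure_pmf.prob M (\<Union>T\<in>TT1. LowAll T)"
      by (rule measure_pmf.finite_measure_mono[OF E1sub]) simp
    also have "\<dots> \<le> (\<Sum>T\<in>TT1. measure_pmf.prob M (LowAll T))"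
      by (rule measure_pmf.finite_measure_subadditive_finite[OF finTT1]) auto
    also have "\<dots> \<le> (\<Sum>T\<in>TT1. \<delta>1 ^ k1)"
    proof (rule sum_mono)
      fix T assume T: "T \<in> TT1"
      then have TA: "T \<subseteq> A" and cT: "card T = k1" by (auto simp: TT1_def)
      have finT: "finite T" using TA finA finite_subset by blast
      have "measure_pmf.prob M (LowAll T) \<le> exp (- c / 120) ^ card T"
        unfolding M_def LowAll_def
        by (rule prob_all_low[OF finT _ _ Bp cards(2) c p0]) (use TA Ap part in auto)
      then show "measure_pmf.prob M (LowAll T) \<le> \<delta>1 ^ k1" by (simp add: \<delta>1_def cT)
    qed
    also have "\<dots> = real (card TT1) * \<delta>1 ^ k1" by simp
    also have "\<dots> \<le> 2 ^ n * \<delta>1 ^ k1"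
    proof (rule mult_right_mono)
      show "real (card TT1) \<le> 2 ^ n" using cTT1 by (metis of_nat_le_iff of_nat_numeral of_nat_power)
    qed (simp add: \<delta>1_def)
    finally show ?thesis .
  qed
  have pE2: "measure_pmf.prob M E2 \<le> real n * (2 ^ n * \<delta>2 ^ k2)"
  proof -
    have "measure_pmf.prob M E2 \<le> measure_pmf.prob M (\<Union>x\<in>A \<times> TT2. Fs x)"
      by (rule measure_pmf.finite_measure_mono[OF E2sub]) simp
    also have "\<dots> \<le> (\<Sum>x\<in>A \<times> TT2. measure_pmf.prob M (Fs x))"
      by (rule measure_pmf.finite_measure_subadditive_finite) (use finA finTT2 in auto)
    also have "\<dots> \<le> (\<Sum>x\<in>A \<times> TT2. \<delta>2 ^ k2)"
    proof (rule sum_mono)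
      fix x assume x: "x \<in> A \<times> TT2"
      then obtain a S where xa: "x = (a, S)" and a: "a \<in> A" and SC: "S \<subseteq> C" and cS: "card S = k2"
        by (auto simp: TT2_def)
      have finS: "finite S" using SC finC finite_subset by blast
      have "measure_pmf.prob M (Fs x) \<le> exp (- c\<^sup>2 / (120 * real p)) ^ card S"
        unfolding M_def Fs_def xa prod.case
        by (rule prob_F[OF _ _ _ Bp finS _ _ c p0]) (use a SC Ap Cp part in auto)
      then show "measure_pmf.prob M (Fs x) \<le> \<delta>2 ^ k2" by (simp add: \<delta>2_def cS)
    qed
    also have "\<dots> = real (card (A \<times> TT2)) * \<delta>2 ^ k2" by simp
    also have "real (card (A \<times> TT2)) = real n * real (card TT2)"
      using finA finTT2 by (simp add: card_cartesian_product n_def)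
    also have "real n * real (card TT2) * \<delta>2 ^ k2 \<le> real n * 2 ^ n * \<delta>2 ^ k2"
    proof (intro mult_right_mono mult_left_mono)
      show "real (card TT2) \<le> 2 ^ n" using cTT2 by (metis of_nat_le_iff of_nat_numeral of_nat_power)
    qed (auto simp: \<delta>2_def)
    finally show ?thesis by (simp add: mult.assoc)
  qed
  have c1440: "1440 \<le> c"
  proof -
    have "c * c \<le> c * real p" using c by (intro mult_left_mono) auto
    then have "c\<^sup>2 / real p \<le> c" using p0 by (simp add: power2_eq_square divide_le_eq)
    then show ?thesis using big by linarith
  qed
  have n1: "2 ^ n * \<delta>1 ^ k1 \<le> exp (- real n)"
    unfolding \<delta>1_def by (rule num_bound[of 6]) (use c1440 in \<open>auto simp: k1_def\<close>)
  have n2': "2 ^ n * \<delta>2 ^ k2 \<le> exp (- real n)"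
  proof -
    have e: "\<delta>2 = exp (- (c\<^sup>2 / real p) / 120)" by (simp add: \<delta>2_def field_simps)
    show ?thesis unfolding e by (rule num_bound[of 4]) (use big in \<open>auto simp: k2_def\<close>)
  qed
  have "measure_pmf.prob M H \<le> measure_pmf.prob M (E1 \<union> E2)"
    by (rule measure_pmf.finite_measure_mono[OF sub]) simp
  also have "\<dots> \<le> measure_pmf.prob M E1 + measure_pmf.prob M E2"
    by (rule measure_subadditive) (auto simp: measure_pmf.emeasure_eq_measure)
  also have "\<dots> \<le> exp (- real n) + real n * exp (- real n)"
    using pE1 pE2 n1 n2' mult_left_mono[OF n2', of "real n"] by linarith
  also have "\<dots> \<le> real n * exp (- real n / 12)" by (rule num_final[OF n2])
  finally show ?thesis by (simp add: M_def H_def \<gamma>_def pn)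
qed

lemma big_ratio:
  fixes K e x cp :: real
  assumes K: "K > 0" and e: "e > 0" and x: "x \<ge> 1" and x2: "x \<ge> (1440 / K\<^sup>2)\<^sup>2"
    and cp: "cp \<ge> K * x powr (3/4 + e)"
  shows "1440 \<le> cp\<^sup>2 / x"
proof -
  have "x powr (3/4) \<le> x powr (3/4 + e)" using x e by (intro powr_mono) auto
  then have c1: "K * x powr (3/4) \<le> cp" using cp K by (meson mult_left_mono less_imp_le order_trans)
  have c0: "0 \<le> K * x powr (3/4)" using K by simp
  have "(K * x powr (3/4))\<^sup>2 \<le> cp\<^sup>2" using c0 c1 by (intro power_mono) auto
  moreover have "(K * x powr (3/4))\<^sup>2 = K\<^sup>2 * (x * sqrt x)"
  proof -
    have "(x powr (3/4))\<^sup>2 = x powr (3/4) * x powr (3/4)" by (simp add: power2_eq_square)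
    also have "\<dots> = x powr (1 + 1/2)" by (simp add: powr_add[symmetric])
    also have "\<dots> = x powr 1 * x powr (1/2)" by (rule powr_add)
    also have "\<dots> = x * sqrt x" using x by (simp add: powr_half_sqrt)
    finally show ?thesis by (simp add: power_mult_distrib)
  qed
  ultimately have h: "K\<^sup>2 * (x * sqrt x) \<le> cp\<^sup>2" by linarith
  then have h2: "K\<^sup>2 * sqrt x * x \<le> cp\<^sup>2" by (simp add: mult_ac)
  have "K\<^sup>2 * sqrt x \<le> cp\<^sup>2 / x" using x h2 by (simp add: pos_le_divide_eq)
  moreover have "1440 / K\<^sup>2 \<le> sqrt x"
  proof -
    have "sqrt ((1440 / K\<^sup>2)\<^sup>2) \<le> sqrt x" using x2 by (rule real_sqrt_le_mono)
    then show ?thesis using K by simp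
  qed
  then have "K\<^sup>2 * (1440 / K\<^sup>2) \<le> K\<^sup>2 * sqrt x" using K by (intro mult_left_mono) auto
  ultimately show ?thesis using K by simp
qed

theorem lemma7:
  fixes c :: "nat \<Rightarrow> real" and \<epsilon>' :: real
  assumes "\<epsilon>' > 0"
    and "c \<in> \<Omega>(\<lambda>p. real p powr (3/4 + \<epsilon>'))"
    and "eventually (\<lambda>p. 0 \<le> c p \<and> c p \<le> real p) at_top"
  shows "eventually (\<lambda>p. \<forall>A B C.
            A \<union> B \<union> C = {..<p} \<and> A \<inter> B = {} \<and> A \<inter> C = {} \<and> B \<inter> C = {} \<and>
            3 * card A = p \<and> 3 * card B = p \<and> 3 * card C = p \<longrightarrow>
            measure_pmf.prob (erdos_renyi p (c p / real p))
              {G. real (m_AC G A B C ((c p)\<^sup>2 / (6 * real p))) \<le> (1/2) * (real p / 3)\<^sup>2}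
            \<le> (real p / 3) * exp (- real p / 36)) at_top"
proof -
  from assms(2) obtain K where K: "K > 0"
    and evK: "eventually (\<lambda>p. norm (c p) \<ge> K * norm (real p powr (3/4 + \<epsilon>'))) at_top"
    by (elim landau_omega.bigE) auto
  define N0 where "N0 = max 6 (nat \<lceil>(1440 / K\<^sup>2)\<^sup>2\<rceil>)"
  have ev: "eventually (\<lambda>p. N0 \<le> p) at_top" by (rule eventually_ge_at_top)
  show ?thesis using evK assms(3) ev
  proof eventually_elim
    case (elim p)
    have p6: "6 \<le> p" using elim(3) by (simp add: N0_def)
    have pbig: "(1440 / K\<^sup>2)\<^sup>2 \<le> real p"
    proof -
      have "nat \<lceil>(1440 / K\<^sup>2)\<^sup>2\<rceil> \<le> p" using elim(3) by (simp add: N0_def)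
      then have "\<lceil>(1440 / K\<^sup>2)\<^sup>2\<rceil> \<le> int p" by linarith
      then show ?thesis by linarith
    qed
    have cp: "c p \<ge> K * real p powr (3/4 + \<epsilon>')" using elim(1) elim(2) by simp
    have big: "1440 \<le> (c p)\<^sup>2 / real p"
      by (rule big_ratio[OF K assms(1) _ pbig cp]) (use p6 in simp)
    show ?case
    proof (intro allI impI)
      fix A B C :: "nat set"
      assume h: "A \<union> B \<union> C = {..<p} \<and> A \<inter> B = {} \<and> A \<inter> C = {} \<and> B \<inter> C = {} \<and>
            3 * card A = p \<and> 3 * card B = p \<and> 3 * card C = p"
      show "measure_pmf.prob (erdos_renyi p (c p / real p))
              {G. real (m_AC G A B C ((c p)\<^sup>2 / (6 * real p))) \<le> (1/2) * (real p / 3)\<^sup>2}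
            \<le> (real p / 3) * exp (- real p / 36)"
        using h elim(2) big p6 by (intro main_fixed) auto
    qed
  qed
qed

end
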